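(* Let $\alpha>0$, $\sigma>0$, and let $\partial^-$ be the linear operator on $\mathbb C[z]$ defined by $\partial^-c_n=nc_{n-1}$ ($n\in\mathbb N_0$, with $c_{-1}:=0$). Then $\partial^-$, regarded as a densely defined operator in $L^2(\alpha\mathbb N_0,\pi_{\alpha,\sigma})$, is closable. Denoting its closure again by $\partial^-$, for each $z\in\mathbb C$ the coherent state $\mathcal E(\cdot,z)$ belongs to the domain of $\sigma\partial^-$ and is an eigenfunction of $\sigma\partial^-$ with eigenvalue $z$ (equivalently, an eigenfunction of $\partial^-$ with eigenvalue $z/\sigma$).
   Context: Let $\pi_{\alpha,\sigma}=\exp(-\sigma/\alpha^2)\sum_{n\ge0}\frac{1}{n!}(\sigma/\alpha^2)^n\delta_{\alpha n}$ on $\alpha\mathbb N_0$ ($\delta_y$ the Dirac measure at $y$), and let $(c_n)_{n\ge0}$ be the monic polynomial sequence orthogonal with respect to $\pi_{\alpha,\sigma}$, with generating function $\sum_{n\ge0}\frac{t^n}{n!}c_n(z)=\exp\big(\frac z\alpha\log(1+t\alpha)-\frac{\sigma t}{\alpha}\big)$; one has $\|c_n\|^2_{L^2(\alpha\mathbb N_0,\pi_{\alpha,\sigma})}=n!\sigma^n$ and polynomials are dense in $L^2(\alpha\mathbb N_0,\pi_{\alpha,\sigma})$. For $z\in\mathbb C$, the coherent state is $\mathcal E(x,z)=\sum_{n\ge0}\frac{z^n}{n!\sigma^n}c_n(x)$ for $x\in\alpha\mathbb N_0$; explicitly $\mathcal E(\alpha n,z)=(1+\alpha z/\sigma)^n\exp(-z/\alpha)$.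 *)

theory Defs
  imports "HOL-Analysis.Analysis" "HOL-Computational_Algebra.Polynomial"
begin

text \<open>Poisson-type weight of the point alpha*n under pi_{alpha,sigma}.\<close>
definition pw :: "real \<Rightarrow> real \<Rightarrow> nat \<Rightarrow> real" where
  "pw \<alpha> \<sigma> n = exp (- \<sigma> / \<alpha>\<^sup>2) * (\<sigma> / \<alpha>\<^sup>2) ^ n / fact n"

text \<open>A function on alpha*N_0 is represented by f :: nat => complex, f n being its value at alpha*n.
  Since all weights are positive, L^2-classes coincide with such functions.\<close>
definition in_L2 :: "real \<Rightarrow> real \<Rightarrow> (nat \<Rightarrow> complex) \<Rightarrow> bool" where
  "in_L2 \<alpha> \<sigma> f \<longleftrightarrow> summable (\<lambda>n. pw \<alpha> \<sigma> n * (cmod (f n))\<^sup>2)"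

definition L2_dist2 :: "real \<Rightarrow> real \<Rightarrow> (nat \<Rightarrow> complex) \<Rightarrow> (nat \<Rightarrow> complex) \<Rightarrow> real" where
  "L2_dist2 \<alpha> \<sigma> f g = (\<Sum>n. pw \<alpha> \<sigma> n * (cmod (f n - g n))\<^sup>2)"

definition L2_conv :: "real \<Rightarrow> real \<Rightarrow> (nat \<Rightarrow> nat \<Rightarrow> complex) \<Rightarrow> (nat \<Rightarrow> complex) \<Rightarrow> bool" where
  "L2_conv \<alpha> \<sigma> F f \<longleftrightarrow> in_L2 \<alpha> \<sigma> f \<and> (\<forall>k. in_L2 \<alpha> \<sigma> (F k)) \<and>
      ((\<lambda>k. L2_dist2 \<alpha> \<sigma> (F k) f) \<longlonglongrightarrow> 0)"

definition restr :: "real \<Rightarrow> complex poly \<Rightarrow> nat \<Rightarrow> complex" where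
  "restr \<alpha> p n = poly p (of_real (\<alpha> * real n))"

text \<open>The orthogonal polynomials c_n (Charlier type), i.e. the coefficients of t^n/n! in
  exp((z/alpha) log(1+t alpha) - sigma t/alpha) = (1+t alpha)^(z/alpha) exp(-sigma t/alpha):
  c_n(z) = sum_k binom(n,k) (-sigma/alpha)^(n-k) prod_{j<k} (z - j alpha).\<close>
definition cpoly :: "real \<Rightarrow> real \<Rightarrow> nat \<Rightarrow> complex poly" where
  "cpoly \<alpha> \<sigma> n = (\<Sum>k\<le>n. smult (of_nat (n choose k) * (of_real (- \<sigma> / \<alpha>)) ^ (n - k))
       (\<Prod>j<k. [: - of_real (real j * \<alpha>), 1 :]))"

definition coh :: "real \<Rightarrow> real \<Rightarrow> complex \<Rightarrow> nat \<Rightarrow> complex" where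
  "coh \<alpha> \<sigma> z k = (\<Sum>n. z ^ n / (of_real (fact n * \<sigma> ^ n)) * restr \<alpha> (cpoly \<alpha> \<sigma> n) k)"

definition closable_poly_op :: "real \<Rightarrow> real \<Rightarrow> (complex poly \<Rightarrow> complex poly) \<Rightarrow> bool" where
  "closable_poly_op \<alpha> \<sigma> D \<longleftrightarrow>
     (\<forall>P g. L2_conv \<alpha> \<sigma> (\<lambda>k. restr \<alpha> (P k)) (\<lambda>_. 0) \<and>
            L2_conv \<alpha> \<sigma> (\<lambda>k. restr \<alpha> (D (P k))) g \<longrightarrow> g = (\<lambda>_. 0))"

text \<open>(f, g) lies in the closure of the graph of D: f is in the domain of the closure of D
  and (closure D) f = g.\<close>
definition closure_graph :: "real \<Rightarrow> real \<Rightarrow> (complex poly \<Rightarrow> complex poly) \<Rightarrow>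
    (nat \<Rightarrow> complex) \<Rightarrow> (nat \<Rightarrow> complex) \<Rightarrow> bool" where
  "closure_graph \<alpha> \<sigma> D f g \<longleftrightarrow>
     (\<exists>P. L2_conv \<alpha> \<sigma> (\<lambda>k. restr \<alpha> (P k)) f \<and> L2_conv \<alpha> \<sigma> (\<lambda>k. restr \<alpha> (D (P k))) g)"

end

theory Submission
  imports Defs
begin

definition ff :: "real \<Rightarrow> nat \<Rightarrow> complex \<Rightarrow> complex" where
  "ff \<alpha> k x = (\<Prod>j<k. x - of_real (real j * \<alpha>))"

lemma poly_cpoly: "poly (cpoly \<alpha> \<sigma> n) x =
   (\<Sum>k\<le>n. of_nat (n choose k) * (of_real (- \<sigma> / \<alpha>)) ^ (n - k) * ff \<alpha> k x)"
  by (simp add: cpoly_def poly_sum poly_prod ff_def)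

lemma ff_0[simp]: "ff \<alpha> 0 x = 1" by (simp add: ff_def)

lemma ff_Suc: "ff \<alpha> (Suc k) x = ff \<alpha> k x * (x - of_real (real k * \<alpha>))"
  by (simp add: ff_def)

lemma ff_shift: "ff \<alpha> (Suc k) (x + of_real \<alpha>) = (x + of_real \<alpha>) * ff \<alpha> k x"
proof -
  have "ff \<alpha> (Suc k) (x + of_real \<alpha>) = (x + of_real \<alpha>) * (\<Prod>j<k. x + of_real \<alpha> - of_real (real (Suc j) * \<alpha>))"
    unfolding ff_def by (subst prod.lessThan_Suc_shift) simp
  also have "(\<Prod>j<k. x + of_real \<alpha> - of_real (real (Suc j) * \<alpha>)) = ff \<alpha> k x"
    unfolding ff_def by (intro prod.cong) (auto simp: algebra_simps)
  finally show ?thesis .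
qed

lemma ff_diff: "ff \<alpha> (Suc k) (x + of_real \<alpha>) - ff \<alpha> (Suc k) x = of_nat (Suc k) * of_real \<alpha> * ff \<alpha> k x"
  by (simp only: ff_shift ff_Suc[of \<alpha> k x]) (simp add: algebra_simps)

lemma ff_diff': "ff \<alpha> k (x + of_real \<alpha>) - ff \<alpha> k x = of_nat k * of_real \<alpha> * ff \<alpha> (k - 1) x"
  by (cases k) (simp_all add: ff_diff)

lemma cpoly_diff:
  "poly (cpoly \<alpha> \<sigma> n) (x + of_real \<alpha>) - poly (cpoly \<alpha> \<sigma> n) x
     = of_real \<alpha> * of_nat n * poly (cpoly \<alpha> \<sigma> (n - 1)) x"
proof (cases n)
  case 0 then show ?thesis by (simp add: poly_cpoly)
next
  case (Suc m)
  let ?a = "(of_real (- \<sigma> / \<alpha>) :: complex)"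
  have "poly (cpoly \<alpha> \<sigma> n) (x + of_real \<alpha>) - poly (cpoly \<alpha> \<sigma> n) x
     = (\<Sum>k\<le>Suc m. of_nat (Suc m choose k) * ?a ^ (Suc m - k) * (ff \<alpha> k (x + of_real \<alpha>) - ff \<alpha> k x))"
    unfolding Suc poly_cpoly sum_subtractf[symmetric] right_diff_distrib ..
  also have "\<dots> = (\<Sum>k\<le>Suc m. of_nat (Suc m choose k) * ?a ^ (Suc m - k) * (of_nat k * of_real \<alpha> * ff \<alpha> (k - 1) x))"
    by (simp add: ff_diff')
  also have "\<dots> = (\<Sum>i\<le>m. of_nat (Suc m choose Suc i) * ?a ^ (m - i) * (of_nat (Suc i) * of_real \<alpha> * ff \<alpha> i x))"
    by (subst sum.atMost_Suc_shift) simp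
  also have "\<dots> = (\<Sum>i\<le>m. of_real \<alpha> * of_nat (Suc m) * (of_nat (m choose i) * ?a ^ (m - i) * ff \<alpha> i x))"
  proof (intro sum.cong refl)
    fix i assume "i \<in> {..m}"
    have "of_nat (Suc m choose Suc i) * (of_nat (Suc i) :: complex) = of_nat (Suc m) * of_nat (m choose i)"
      by (metis Suc_times_binomial_eq mult.commute of_nat_mult)
    hence h: "of_nat (Suc m choose Suc i) * (of_nat (Suc i) :: complex) * (of_real \<alpha> * ?a ^ (m - i) * ff \<alpha> i x)
       = of_nat (Suc m) * of_nat (m choose i) * (of_real \<alpha> * ?a ^ (m - i) * ff \<alpha> i x)" by simp
    have "of_nat (Suc m choose Suc i) * ?a ^ (m - i) * (of_nat (Suc i) * of_real \<alpha> * ff \<alpha> i x)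
       = of_nat (Suc m choose Suc i) * (of_nat (Suc i) :: complex) * (of_real \<alpha> * ?a ^ (m - i) * ff \<alpha> i x)"
      by (simp only: mult_ac)
    also note h
    also have "of_nat (Suc m) * of_nat (m choose i) * (of_real \<alpha> * ?a ^ (m - i) * ff \<alpha> i x) =
       of_real \<alpha> * of_nat (Suc m) * (of_nat (m choose i) * ?a ^ (m - i) * ff \<alpha> i x)"
      by (simp only: mult_ac)
    finally show "of_nat (Suc m choose Suc i) * ?a ^ (m - i) * (of_nat (Suc i) * of_real \<alpha> * ff \<alpha> i x) =
       of_real \<alpha> * of_nat (Suc m) * (of_nat (m choose i) * ?a ^ (m - i) * ff \<alpha> i x)" .
  qed
  also have "\<dots> = of_real \<alpha> * of_nat n * poly (cpoly \<alpha> \<sigma> (n - 1)) x"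
    by (simp add: poly_cpoly Suc sum_distrib_left)
  finally show ?thesis .
qed

definition Dl :: "real \<Rightarrow> complex poly \<Rightarrow> complex poly" where
  "Dl \<alpha> p = smult (1 / of_real \<alpha>) (pcompose p [:of_real \<alpha>, 1:] - p)"

lemma poly_Dl: "poly (Dl \<alpha> p) x = (poly p (x + of_real \<alpha>) - poly p x) / of_real \<alpha>"
  by (simp add: Dl_def poly_pcompose diff_divide_distrib add.commute)

lemma Dl_add: "Dl \<alpha> (p + q) = Dl \<alpha> p + Dl \<alpha> q"
proof -
  have "pcompose (p + q) [:of_real \<alpha>, 1:] - (p + q) = (pcompose p [:of_real \<alpha>, 1:] - p) + (pcompose q [:of_real \<alpha>, 1:] - q)"
    by (simp add: pcompose_add)
  then show ?thesis unfolding Dl_def by (simp only: smult_add_right)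
qed

lemma Dl_smult: "Dl \<alpha> (smult a p) = smult a (Dl \<alpha> p)"
  by (simp add: Dl_def pcompose_smult smult_diff_right)

lemma Dl_cpoly: assumes "\<alpha> \<noteq> 0" shows "Dl \<alpha> (cpoly \<alpha> \<sigma> n) = smult (of_nat n) (cpoly \<alpha> \<sigma> (n - 1))"
proof -
  have "poly (Dl \<alpha> (cpoly \<alpha> \<sigma> n)) x = poly (smult (of_nat n) (cpoly \<alpha> \<sigma> (n - 1))) x" for x
    using assms by (simp add: poly_Dl cpoly_diff)
  then have "poly (Dl \<alpha> (cpoly \<alpha> \<sigma> n)) = poly (smult (of_nat n) (cpoly \<alpha> \<sigma> (n - 1)))" by auto
  then show ?thesis by (simp only: poly_eq_poly_eq_iff)
qed

definition Fp :: "real \<Rightarrow> nat \<Rightarrow> complex poly" where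
  "Fp \<alpha> k = (\<Prod>j<k. [: - of_real (real j * \<alpha>), 1 :])"

lemma Fp_deg: "degree (Fp \<alpha> k) = k \<and> coeff (Fp \<alpha> k) k = 1"
proof (induction k)
  case 0 then show ?case by (simp add: Fp_def)
next
  case (Suc k)
  have e: "Fp \<alpha> (Suc k) = Fp \<alpha> k * [: - of_real (real k * \<alpha>), 1 :]" by (simp add: Fp_def)
  have nz: "Fp \<alpha> k \<noteq> 0" using Suc by auto
  have "degree (Fp \<alpha> (Suc k)) = Suc k" unfolding e using nz Suc by (subst degree_mult_eq) auto
  moreover have "coeff (Fp \<alpha> (Suc k)) (Suc k) = 1"
    using lead_coeff_mult[of "Fp \<alpha> k" "[: - of_real (real k * \<alpha>), 1 :]"] \<open>degree (Fp \<alpha> (Suc k)) = Suc k\<close> Suc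
    unfolding e by simp
  ultimately show ?case by simp
qed

lemma cpoly_Fp: "cpoly \<alpha> \<sigma> n = (\<Sum>k\<le>n. smult (of_nat (n choose k) * (of_real (- \<sigma> / \<alpha>)) ^ (n - k)) (Fp \<alpha> k))"
  by (simp add: cpoly_def Fp_def)

lemma cpoly_coeff: "coeff (cpoly \<alpha> \<sigma> n) n = 1 \<and> (\<forall>i>n. coeff (cpoly \<alpha> \<sigma> n) i = 0)"
proof -
  let ?g = "\<lambda>k. smult (of_nat (n choose k) * (of_real (- \<sigma> / \<alpha>)) ^ (n - k)) (Fp \<alpha> k)"
  have s: "cpoly \<alpha> \<sigma> n = (\<Sum>k<n. ?g k) + ?g n"
    unfolding cpoly_Fp by (simp add: lessThan_Suc_atMost[symmetric])
  have z: "coeff (\<Sum>k<n. ?g k) i = 0" if "i \<ge> n" for i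
    unfolding coeff_sum using Fp_deg that by (auto intro!: sum.neutral coeff_eq_0)
  have "coeff (cpoly \<alpha> \<sigma> n) n = 1" unfolding s using z[of n] Fp_deg[of \<alpha> n] by simp
  moreover have "coeff (cpoly \<alpha> \<sigma> n) i = 0" if "i > n" for i
    unfolding s using z[of i] that Fp_deg[of \<alpha> n] by (simp add: coeff_eq_0)
  ultimately show ?thesis by blast
qed

lemma cpoly_0: "cpoly \<alpha> \<sigma> 0 = 1" by (simp add: cpoly_def)

lemma D_eq_Dl:
  fixes D :: "complex poly \<Rightarrow> complex poly"
  assumes "\<alpha> \<noteq> 0"
    and add: "\<And>p q. D (p + q) = D p + D q"
    and sm: "\<And>a p. D (smult a p) = smult a (D p)"
    and cp: "\<And>n. D (cpoly \<alpha> \<sigma> n) = smult (of_nat n) (cpoly \<alpha> \<sigma> (n - 1))"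
  shows "D p = Dl \<alpha> p"
proof -
  have key: "D p = Dl \<alpha> p" if "degree p \<le> N" for N p
    using that
  proof (induction N arbitrary: p)
    case 0
    then have "p = smult (coeff p 0) (cpoly \<alpha> \<sigma> 0)" by (simp add: cpoly_0 degree_0_id)
    then show ?case using cp[of 0] Dl_cpoly[OF assms(1), of \<sigma> 0] sm Dl_smult by metis
  next
    case (Suc N)
    define c where "c = coeff p (Suc N)"
    define q where "q = p - smult c (cpoly \<alpha> \<sigma> (Suc N))"
    have "degree q \<le> N"
    proof (rule degree_le, intro allI impI)
      fix i assume "N < i"
      then consider "i = Suc N" | "i > Suc N" by linarith
      then show "coeff q i = 0"
        using cpoly_coeff[of \<alpha> \<sigma> "Suc N"] Suc.prems
        by cases (auto simp: q_def c_def coeff_eq_0)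
    qed
    then have "D q = Dl \<alpha> q" by (rule Suc.IH)
    have p: "p = q + smult c (cpoly \<alpha> \<sigma> (Suc N))" by (simp add: q_def)
    show ?case
      by (subst (1 2) p) (simp add: add sm Dl_add Dl_smult cp Dl_cpoly[OF assms(1)] \<open>D q = Dl \<alpha> q\<close> del: of_nat_Suc)
  qed
  show ?thesis using key[OF order_refl] .
qed

lemma pw_pos: "\<alpha> > 0 \<Longrightarrow> \<sigma> > 0 \<Longrightarrow> pw \<alpha> \<sigma> m > 0"
  by (simp add: pw_def)

lemma sq_diff_le: "(cmod (a - b))\<^sup>2 \<le> 2 * (cmod a)\<^sup>2 + 2 * (cmod b)\<^sup>2"
proof -
  have "cmod (a - b) \<le> cmod a + cmod b" by (rule norm_triangle_ineq4)
  then have "(cmod (a - b))\<^sup>2 \<le> (cmod a + cmod b)\<^sup>2" by (simp add: power_mono)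
  also have "\<dots> \<le> 2 * (cmod a)\<^sup>2 + 2 * (cmod b)\<^sup>2"
  proof -
    have "0 \<le> (cmod a - cmod b)\<^sup>2" by simp
    then show ?thesis unfolding power2_diff power2_sum by linarith
  qed
  finally show ?thesis .
qed

lemma L2_diff_summable:
  assumes "\<alpha> > 0" "\<sigma> > 0" "in_L2 \<alpha> \<sigma> f" "in_L2 \<alpha> \<sigma> g"
  shows "summable (\<lambda>n. pw \<alpha> \<sigma> n * (cmod (f n - g n))\<^sup>2)"
proof (rule summable_comparison_test'[where N=0])
  show "summable (\<lambda>n. 2 * (pw \<alpha> \<sigma> n * (cmod (f n))\<^sup>2) + 2 * (pw \<alpha> \<sigma> n * (cmod (g n))\<^sup>2))"
    using assms(3,4) unfolding in_L2_def by (intro summable_add summable_mult)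
  fix n
  have "pw \<alpha> \<sigma> n * (cmod (f n - g n))\<^sup>2 \<le> pw \<alpha> \<sigma> n * (2 * (cmod (f n))\<^sup>2 + 2 * (cmod (g n))\<^sup>2)"
    using pw_pos[OF assms(1,2)] sq_diff_le by (intro mult_left_mono) (auto simp: less_imp_le)
  then show "norm (pw \<alpha> \<sigma> n * (cmod (f n - g n))\<^sup>2) \<le> 2 * (pw \<alpha> \<sigma> n * (cmod (f n))\<^sup>2) + 2 * (pw \<alpha> \<sigma> n * (cmod (g n))\<^sup>2)"
    using pw_pos[OF assms(1,2), of n] by (simp add: algebra_simps)
qed

lemma L2_conv_pointwise:
  assumes "\<alpha> > 0" "\<sigma> > 0" "L2_conv \<alpha> \<sigma> F f"
  shows "(\<lambda>k. F k m) \<longlonglongrightarrow> f m"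
proof -
  have pm: "pw \<alpha> \<sigma> m > 0" using pw_pos assms by auto
  have le: "(cmod (F k m - f m))\<^sup>2 \<le> L2_dist2 \<alpha> \<sigma> (F k) f / pw \<alpha> \<sigma> m" for k
  proof -
    have s: "summable (\<lambda>n. pw \<alpha> \<sigma> n * (cmod (F k n - f n))\<^sup>2)"
      using assms unfolding L2_conv_def by (intro L2_diff_summable) auto
    have "pw \<alpha> \<sigma> m * (cmod (F k m - f m))\<^sup>2 \<le> L2_dist2 \<alpha> \<sigma> (F k) f"
      unfolding L2_dist2_def using sum_le_suminf[OF s, of "{m}"] pw_pos[OF assms(1,2)]
      by (simp add: less_imp_le)
    then show ?thesis using pm by (simp add: field_simps)
  qed
  have lim: "(\<lambda>k. L2_dist2 \<alpha> \<sigma> (F k) f / pw \<alpha> \<sigma> m) \<longlonglongrightarrow> 0 / pw \<alpha> \<sigma> m"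
    using assms(3) pm unfolding L2_conv_def by (intro tendsto_divide) auto
  have "(\<lambda>k. (cmod (F k m - f m))\<^sup>2) \<longlonglongrightarrow> 0"
  proof (rule Lim_null_comparison)
    show "eventually (\<lambda>k. norm ((cmod (F k m - f m))\<^sup>2) \<le> L2_dist2 \<alpha> \<sigma> (F k) f / pw \<alpha> \<sigma> m) sequentially"
      using le by (simp add: always_eventually)
    show "(\<lambda>k. L2_dist2 \<alpha> \<sigma> (F k) f / pw \<alpha> \<sigma> m) \<longlonglongrightarrow> 0" using lim by simp
  qed
  then have "(\<lambda>k. sqrt ((cmod (F k m - f m))\<^sup>2)) \<longlonglongrightarrow> sqrt 0"
    by (rule tendsto_real_sqrt)
  then have "(\<lambda>k. cmod (F k m - f m)) \<longlonglongrightarrow> 0" by simp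
  then have "(\<lambda>k. F k m - f m) \<longlonglongrightarrow> 0" by (simp only: tendsto_norm_zero_iff)
  then show ?thesis by (rule LIM_zero_cancel)
qed

lemma restr_Dl: "restr \<alpha> (Dl \<alpha> p) m = (restr \<alpha> p (Suc m) - restr \<alpha> p m) / of_real \<alpha>"
  by (simp add: restr_def poly_Dl algebra_simps)

lemma closable:
  fixes D :: "complex poly \<Rightarrow> complex poly"
  assumes "\<alpha> > 0" "\<sigma> > 0"
    and DD: "\<And>p. D p = Dl \<alpha> p"
  shows "closable_poly_op \<alpha> \<sigma> D"
  unfolding closable_poly_op_def
proof (intro allI impI ext, elim conjE)
  fix P g m
  assume h1: "L2_conv \<alpha> \<sigma> (\<lambda>k. restr \<alpha> (P k)) (\<lambda>_. 0)"
     and h2: "L2_conv \<alpha> \<sigma> (\<lambda>k. restr \<alpha> (D (P k))) g"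
  have a: "(\<lambda>k. restr \<alpha> (D (P k)) m) \<longlonglongrightarrow> g m"
    using L2_conv_pointwise[OF assms(1,2) h2] .
  have "(\<lambda>k. (restr \<alpha> (P k) (Suc m) - restr \<alpha> (P k) m) / of_real \<alpha>) \<longlonglongrightarrow> (0 - 0) / of_real \<alpha>"
    using L2_conv_pointwise[OF assms(1,2) h1] assms(1)
    by (intro tendsto_divide tendsto_diff) auto
  then have b: "(\<lambda>k. restr \<alpha> (D (P k)) m) \<longlonglongrightarrow> 0" by (simp add: DD restr_Dl)
  show "g m = 0" using LIMSEQ_unique[OF a b] .
qed

lemma pw_exp: "pw \<alpha> \<sigma> m * (C * B ^ m)\<^sup>2 = (C\<^sup>2 * exp (- \<sigma> / \<alpha>\<^sup>2)) * (inverse (fact m) * (\<sigma> / \<alpha>\<^sup>2 * B\<^sup>2) ^ m)"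
  by (simp add: pw_def power_mult_distrib power2_eq_square field_simps power_mult[symmetric])

lemma L2_tail:
  fixes F :: "nat \<Rightarrow> nat \<Rightarrow> complex"
  assumes "\<alpha> > 0" "\<sigma> > 0"
    and bF: "\<And>K m. cmod (F K m) \<le> C * B ^ m"
    and bf: "\<And>m. cmod (f m) \<le> C * B ^ m"
    and eq: "\<And>K m. m \<le> K \<Longrightarrow> F K m = f m"
  shows "L2_conv \<alpha> \<sigma> F f"
proof -
  define h where "h m = pw \<alpha> \<sigma> m * (C * B ^ m)\<^sup>2" for m
  have pw0: "pw \<alpha> \<sigma> m \<ge> 0" for m using pw_pos[OF assms(1,2)] less_imp_le by blast
  have hs: "summable h"
    unfolding h_def pw_exp by (intro summable_mult summable_exp)
  have dom: "summable (\<lambda>n. pw \<alpha> \<sigma> n * (cmod (g n))\<^sup>2)" if "\<And>m. cmod (g m) \<le> C * B ^ m" for g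
  proof (rule summable_comparison_test'[OF hs, where N=0])
    fix n
    have "(cmod (g n))\<^sup>2 \<le> (C * B ^ n)\<^sup>2" using that[of n] by (intro power_mono) auto
    then show "norm (pw \<alpha> \<sigma> n * (cmod (g n))\<^sup>2) \<le> h n"
      unfolding h_def using pw0[of n] by (simp add: mult_left_mono)
  qed
  have L2f: "in_L2 \<alpha> \<sigma> f" unfolding in_L2_def using bf by (rule dom)
  have L2F: "in_L2 \<alpha> \<sigma> (F K)" for K unfolding in_L2_def using bF by (intro dom) auto
  define g where "g K m = (if m \<le> K then 0 else 4 * h m)" for K m
  have gsum: "(\<Sum>m. g K m) = 4 * (suminf h - (\<Sum>m\<le>K. h m))" for K
  proof -
    have "(\<lambda>m. if m \<le> K then 4 * h m else 0) sums (\<Sum>m\<in>{..K}. (if m \<le> K then 4 * h m else 0))"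
      by (rule sums_finite) auto
    then have s1: "(\<lambda>m. if m \<le> K then 4 * h m else 0) sums (4 * (\<Sum>m\<le>K. h m))"
      by (simp add: sum_distrib_left)
    have s2: "(\<lambda>m. 4 * h m) sums (4 * suminf h)" using hs by (intro sums_mult summable_sums)
    have "(\<lambda>m. 4 * h m - (if m \<le> K then 4 * h m else 0)) sums (4 * suminf h - 4 * (\<Sum>m\<le>K. h m))"
      by (rule sums_diff[OF s2 s1])
    moreover have "(\<lambda>m. 4 * h m - (if m \<le> K then 4 * h m else 0)) = g K" by (auto simp: g_def fun_eq_iff)
    ultimately show ?thesis by (simp add: sums_iff right_diff_distrib)
  qed
  have gs: "summable (g K)" for K
  proof -
    have "(\<lambda>m. 4 * h m - (if m \<le> K then 4 * h m else 0)) = g K" by (auto simp: g_def fun_eq_iff)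
    moreover have "summable (\<lambda>m. 4 * h m - (if m \<le> K then 4 * h m else 0))"
    proof (rule summable_diff)
      show "summable (\<lambda>m. 4 * h m)" using hs by (rule summable_mult)
      show "summable (\<lambda>m. if m \<le> K then 4 * h m else 0)" by (rule summable_finite[of "{..K}"]) auto
    qed
    ultimately show ?thesis by simp
  qed
  have upper: "L2_dist2 \<alpha> \<sigma> (F K) f \<le> 4 * (suminf h - (\<Sum>m\<le>K. h m))" for K
  proof -
    have "L2_dist2 \<alpha> \<sigma> (F K) f \<le> (\<Sum>m. g K m)"
      unfolding L2_dist2_def
    proof (rule suminf_le)
      show "summable (\<lambda>n. pw \<alpha> \<sigma> n * (cmod (F K n - f n))\<^sup>2)"
        using L2f L2F assms(1,2) by (intro L2_diff_summable)
      show "summable (g K)" by (rule gs)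
      fix m
      show "pw \<alpha> \<sigma> m * (cmod (F K m - f m))\<^sup>2 \<le> g K m"
      proof (cases "m \<le> K")
        case True then show ?thesis by (simp add: eq g_def)
      next
        case False
        have "cmod (F K m - f m) \<le> 2 * (C * B ^ m)"
          using norm_triangle_ineq4[of "F K m" "f m"] bF[of K m] bf[of m] by linarith
        then have "(cmod (F K m - f m))\<^sup>2 \<le> (2 * (C * B ^ m))\<^sup>2" by (intro power_mono) auto
        then have "pw \<alpha> \<sigma> m * (cmod (F K m - f m))\<^sup>2 \<le> pw \<alpha> \<sigma> m * (2 * (C * B ^ m))\<^sup>2"
          using pw0[of m] by (simp add: mult_left_mono)
        then show ?thesis using False by (simp add: g_def h_def power_mult_distrib)
      qed
    qed
    then show ?thesis by (simp add: gsum)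
  qed
  have lower: "0 \<le> L2_dist2 \<alpha> \<sigma> (F K) f" for K
    unfolding L2_dist2_def using pw0 by (intro suminf_nonneg L2_diff_summable L2f L2F assms(1,2)) auto
  have "(\<lambda>K. 4 * (suminf h - (\<Sum>m\<le>K. h m))) \<longlonglongrightarrow> 4 * (suminf h - suminf h)"
    by (intro tendsto_mult tendsto_diff tendsto_const summable_LIMSEQ' hs)
  then have t: "(\<lambda>K. 4 * (suminf h - (\<Sum>m\<le>K. h m))) \<longlonglongrightarrow> 0" by simp
  have "(\<lambda>K. L2_dist2 \<alpha> \<sigma> (F K) f) \<longlonglongrightarrow> 0"
    by (rule tendsto_sandwich[OF always_eventually always_eventually tendsto_const t]) (use lower upper in auto)
  then show ?thesis unfolding L2_conv_def using L2f L2F by auto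
qed

definition S :: "real \<Rightarrow> complex \<Rightarrow> nat \<Rightarrow> complex \<Rightarrow> complex" where
  "S \<alpha> w N x = (\<Sum>k\<le>N. w ^ k / fact k * ff \<alpha> k x)"

lemma ff_lat_zero: "m < k \<Longrightarrow> ff \<alpha> k (of_real (\<alpha> * real m)) = 0"
  unfolding ff_def by (rule prod_zero) (auto intro!: bexI[of _ m] simp: mult.commute)

lemma S_stable: "m \<le> N \<Longrightarrow> S \<alpha> w N (of_real (\<alpha> * real m)) = S \<alpha> w m (of_real (\<alpha> * real m))"
proof (induction N rule: dec_induct)
  case base then show ?case by simp
next
  case (step n)
  have "ff \<alpha> (Suc n) (of_real (\<alpha> * real m)) = 0" using step by (intro ff_lat_zero) auto
  then show ?case using step.IH by (simp add: S_def)
qed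

lemma S_diff: "S \<alpha> w (Suc N) (x + of_real \<alpha>) - S \<alpha> w (Suc N) x = of_real \<alpha> * w * S \<alpha> w N x"
proof -
  have "S \<alpha> w (Suc N) (x + of_real \<alpha>) - S \<alpha> w (Suc N) x
      = (\<Sum>k\<le>Suc N. w ^ k / fact k * (ff \<alpha> k (x + of_real \<alpha>) - ff \<alpha> k x))"
    unfolding S_def sum_subtractf[symmetric] right_diff_distrib ..
  also have "\<dots> = (\<Sum>k\<le>Suc N. w ^ k / fact k * (of_nat k * of_real \<alpha> * ff \<alpha> (k - 1) x))"
    by (simp add: ff_diff')
  also have "\<dots> = (\<Sum>i\<le>N. w ^ Suc i / fact (Suc i) * (of_nat (Suc i) * of_real \<alpha> * ff \<alpha> i x))"
    by (subst sum.atMost_Suc_shift) simp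
  also have "\<dots> = (\<Sum>i\<le>N. of_real \<alpha> * w * (w ^ i / fact i * ff \<alpha> i x))"
  proof (intro sum.cong refl)
    fix i
    have "(fact (Suc i) :: complex) = of_nat (Suc i) * fact i" by (rule fact_Suc)
    moreover have "(fact i :: complex) \<noteq> 0" by simp
    moreover have "(of_nat (Suc i) :: complex) \<noteq> 0" by (simp del: of_nat_Suc)
    ultimately show "w ^ Suc i / fact (Suc i) * (of_nat (Suc i) * of_real \<alpha> * ff \<alpha> i x) =
      of_real \<alpha> * w * (w ^ i / fact i * ff \<alpha> i x)"
      by (simp del: of_nat_Suc fact_Suc add: field_simps)
  qed
  also have "\<dots> = of_real \<alpha> * w * S \<alpha> w N x" by (simp add: S_def sum_distrib_left)
  finally show ?thesis .
qed

lemma S_closed: "S \<alpha> w m (of_real (\<alpha> * real m)) = (1 + of_real \<alpha> * w) ^ m"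
proof (induction m)
  case 0 then show ?case by (simp add: S_def)
next
  case (Suc m)
  let ?x = "(of_real (\<alpha> * real m) :: complex)"
  have x: "(of_real (\<alpha> * real (Suc m)) :: complex) = ?x + of_real \<alpha>" by (simp add: algebra_simps)
  have "S \<alpha> w (Suc m) (of_real (\<alpha> * real (Suc m))) = S \<alpha> w (Suc m) ?x + of_real \<alpha> * w * S \<alpha> w m ?x"
    unfolding x using S_diff[of \<alpha> w m ?x] by (simp add: algebra_simps)
  also have "S \<alpha> w (Suc m) ?x = S \<alpha> w m ?x" by (rule S_stable) simp
  finally show ?case using Suc by (simp add: algebra_simps)
qed

lemma ff_lat_real:
  assumes "\<alpha> > 0"
  shows "ff \<alpha> k (of_real (\<alpha> * real m)) = of_real (cmod (ff \<alpha> k (of_real (\<alpha> * real m))))"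
proof (cases "k \<le> m")
  case True
  have e: "ff \<alpha> k (of_real (\<alpha> * real m)) = of_real (\<Prod>j<k. \<alpha> * real m - real j * \<alpha>)"
    by (simp add: ff_def of_real_prod)
  have nn: "(\<Prod>j<k. \<alpha> * real m - real j * \<alpha>) \<ge> 0"
  proof (rule prod_nonneg)
    fix j assume "j \<in> {..<k}"
    then have "real j \<le> real m" using True by simp
    then show "0 \<le> \<alpha> * real m - real j * \<alpha>" using assms by (simp add: algebra_simps mult_left_mono)
  qed
  have r: "cmod (of_real (\<Prod>j<k. \<alpha> * real m - real j * \<alpha>)) = (\<Prod>j<k. \<alpha> * real m - real j * \<alpha>)"
    using nn by (simp only: norm_of_real abs_of_nonneg)
  show ?thesis unfolding e r ..
next
  case False
  have "ff \<alpha> k (of_real (\<alpha> * real m)) = 0" using False by (intro ff_lat_zero) auto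
  then show ?thesis by simp
qed

lemma S_bound:
  assumes "\<alpha> > 0"
  shows "cmod (S \<alpha> w N (of_real (\<alpha> * real m))) \<le> (1 + \<alpha> * cmod w) ^ m"
proof -
  let ?x = "(of_real (\<alpha> * real m) :: complex)"
  define R where "R N = (\<Sum>k\<le>N. cmod w ^ k / fact k * cmod (ff \<alpha> k ?x))" for N
  have R: "of_real (R N) = S \<alpha> (of_real (cmod w)) N ?x" for N
    unfolding R_def S_def of_real_sum
  proof (intro sum.cong refl)
    fix k
    have "(of_real (cmod w ^ k / fact k * cmod (ff \<alpha> k ?x)) :: complex)
        = of_real (cmod w) ^ k / fact k * of_real (cmod (ff \<alpha> k ?x))" by simp
    also have "of_real (cmod (ff \<alpha> k ?x)) = ff \<alpha> k ?x" using ff_lat_real[OF assms, of k m] by simp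
    finally show "(of_real (cmod w ^ k / fact k * cmod (ff \<alpha> k ?x)) :: complex)
        = of_real (cmod w) ^ k / fact k * ff \<alpha> k ?x" .
  qed
  have R0: "R N' \<ge> 0" for N' unfolding R_def by (intro sum_nonneg) simp
  have "cmod (S \<alpha> w N ?x) \<le> (\<Sum>k\<le>N. cmod (w ^ k / fact k * ff \<alpha> k ?x))"
    unfolding S_def by (rule norm_sum)
  also have "\<dots> = R N" unfolding R_def by (simp add: norm_mult norm_divide norm_power)
  also have "R N \<le> R (max N m)" unfolding R_def by (intro sum_mono2) auto
  also have "R (max N m) = cmod (of_real (R (max N m)) :: complex)"
    using R0[of "max N m"] by simp
  also have "\<dots> = cmod (S \<alpha> (of_real (cmod w)) m ?x)" unfolding R by (subst S_stable) auto
  also have "\<dots> = cmod ((1 + of_real \<alpha> * of_real (cmod w)) ^ m :: complex)" by (simp only: S_closed)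
  also have "\<dots> = (1 + \<alpha> * cmod w) ^ m"
  proof -
    have "(1 + of_real \<alpha> * of_real (cmod w) :: complex) = of_real (1 + \<alpha> * cmod w)" by simp
    moreover have "\<bar>1 + \<alpha> * cmod w\<bar> = 1 + \<alpha> * cmod w" using assms by simp
    ultimately show ?thesis by (simp only: norm_power norm_of_real)
  qed
  finally show ?thesis .
qed

lemma coh_closed:
  assumes "\<alpha> > 0" "\<sigma> > 0"
  shows "coh \<alpha> \<sigma> z m = exp (- z / of_real \<alpha>) * (1 + of_real \<alpha> * (z / of_real \<sigma>)) ^ m"
proof -
  define w where "w = z / of_real \<sigma>"
  define a :: complex where "a = of_real (- \<sigma> / \<alpha>)"
  define x :: complex where "x = of_real (\<alpha> * real m)"
  define A where "A j = (w * a) ^ j /\<^sub>R fact j" for j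
  define B where "B i = w ^ i / fact i * ff \<alpha> i x" for i
  have tm: "z ^ n / of_real (fact n * \<sigma> ^ n) * restr \<alpha> (cpoly \<alpha> \<sigma> n) m = (\<Sum>i\<le>n. B i * A (n - i))" for n
  proof -
    have "z ^ n / of_real (fact n * \<sigma> ^ n) * restr \<alpha> (cpoly \<alpha> \<sigma> n) m
        = (\<Sum>k\<le>n. w ^ n / fact n * (of_nat (n choose k) * a ^ (n - k) * ff \<alpha> k x))"
      using assms by (simp add: restr_def poly_cpoly sum_distrib_left w_def a_def x_def power_divide ac_simps)
    also have "\<dots> = (\<Sum>i\<le>n. B i * A (n - i))"
    proof (intro sum.cong refl)
      fix k assume "k \<in> {..n}"
      then have kn: "k \<le> n" by simp
      have c: "(of_nat (n choose k) :: complex) = fact n / (fact k * fact (n - k))" by (rule binomial_fact[OF kn])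
      have p: "w ^ n = w ^ k * w ^ (n - k)" using kn by (simp flip: power_add)
      have Ae: "A (n - k) = (w * a) ^ (n - k) / fact (n - k)"
        by (simp add: A_def scaleR_conv_of_real divide_inverse mult.commute)
      have gen: "u * v / fn * (fn / (fk * fnk) * c * F) = u / fk * F * (v * c / fnk)"
        if "fn \<noteq> 0" "fk \<noteq> 0" "fnk \<noteq> 0" for u v fn fk fnk c F :: complex
        using that by (simp add: field_simps)
      have pm: "(w * a) ^ (n - k) = w ^ (n - k) * a ^ (n - k)" by (rule power_mult_distrib)
      show "w ^ n / fact n * (of_nat (n choose k) * a ^ (n - k) * ff \<alpha> k x) = B k * A (n - k)"
        unfolding B_def c p Ae pm by (rule gen) auto
    qed
    finally show ?thesis .
  qed
  have Bz: "B i = 0" if "i \<notin> {..m}" for i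
  proof -
    have "ff \<alpha> i x = 0" unfolding x_def using that by (intro ff_lat_zero) auto
    then show ?thesis by (simp add: B_def)
  qed
  have sB: "B sums (\<Sum>i\<in>{..m}. B i)" by (rule sums_finite) (use Bz in auto)
  have sumB: "(\<Sum>i\<in>{..m}. B i) = (1 + of_real \<alpha> * w) ^ m"
    unfolding B_def x_def using S_closed[of \<alpha> w m] by (simp add: S_def)
  have nB: "summable (\<lambda>i. norm (B i))" by (rule summable_finite[of "{..m}"]) (use Bz in auto)
  have nA: "summable (\<lambda>j. norm (A j))" unfolding A_def by (rule summable_norm_exp)
  have sA: "A sums exp (w * a)" unfolding A_def by (rule exp_converges)
  have "(\<lambda>n. \<Sum>i\<le>n. B i * A (n - i)) sums (suminf B * suminf A)"
    by (rule Cauchy_product_sums[OF nB nA])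
  then have "(\<lambda>n. z ^ n / of_real (fact n * \<sigma> ^ n) * restr \<alpha> (cpoly \<alpha> \<sigma> n) m) sums ((1 + of_real \<alpha> * w) ^ m * exp (w * a))"
    unfolding tm using sums_unique[OF sB] sums_unique[OF sA] sumB by simp
  moreover have "w * a = - z / of_real \<alpha>" using assms by (simp add: w_def a_def field_simps)
  ultimately show ?thesis unfolding coh_def w_def by (simp add: sums_iff mult.commute)
qed

lemma poly_Fp: "poly (Fp \<alpha> k) x = ff \<alpha> k x"
  by (simp add: Fp_def ff_def poly_prod)

theorem proposition4p7:
  fixes \<alpha> \<sigma> :: real and D :: "complex poly \<Rightarrow> complex poly"
  assumes "\<alpha> > 0" and "\<sigma> > 0"
    and "\<And>p q. D (p + q) = D p + D q"
    and "\<And>a p. D (smult a p) = smult a (D p)"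
    and "\<And>n. D (cpoly \<alpha> \<sigma> n) = smult (of_nat n) (cpoly \<alpha> \<sigma> (n - 1))"
  shows "closable_poly_op \<alpha> \<sigma> D \<and>
    (\<forall>z. closure_graph \<alpha> \<sigma> (\<lambda>p. smult (of_real \<sigma>) (D p)) (coh \<alpha> \<sigma> z) (\<lambda>k. z * coh \<alpha> \<sigma> z k))"
proof -
  have DD: "D p = Dl \<alpha> p" for p
    using assms(1) by (intro D_eq_Dl[OF _ assms(3,4,5)]) auto
  have cl: "closable_poly_op \<alpha> \<sigma> D" using closable[OF assms(1,2) DD] .
  have "closure_graph \<alpha> \<sigma> (\<lambda>p. smult (of_real \<sigma>) (D p)) (coh \<alpha> \<sigma> z) (\<lambda>k. z * coh \<alpha> \<sigma> z k)" for z
  proof -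
    define w where "w = z / of_real \<sigma>"
    define e0 where "e0 = exp (- z / of_real \<alpha>)"
    define \<beta> where "\<beta> = 1 + of_real \<alpha> * w"
    define B0 where "B0 = 1 + \<alpha> * cmod w"
    define Q where "Q K = smult e0 (\<Sum>k\<le>Suc K. smult (w ^ k / fact k) (Fp \<alpha> k))" for K
    have B0: "B0 \<ge> 1" unfolding B0_def using assms(1) by simp
    have coh: "coh \<alpha> \<sigma> z m = e0 * \<beta> ^ m" for m
      unfolding e0_def \<beta>_def w_def by (rule coh_closed[OF assms(1,2)])
    have rQ: "restr \<alpha> (Q K) m = e0 * S \<alpha> w (Suc K) (of_real (\<alpha> * real m))" for K m
      by (simp add: Q_def restr_def poly_sum poly_Fp S_def)
    have rQb: "cmod (restr \<alpha> (Q K) m) \<le> cmod e0 * B0 ^ m" for K m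
      unfolding rQ norm_mult B0_def using S_bound[OF assms(1)] by (intro mult_left_mono) auto
    have rQe: "restr \<alpha> (Q K) m = e0 * \<beta> ^ m" if "m \<le> Suc K" for K m
      unfolding rQ \<beta>_def using that by (simp only: S_stable S_closed)
    have bb: "cmod \<beta> \<le> B0" unfolding \<beta>_def B0_def
      using norm_triangle_ineq[of 1 "of_real \<alpha> * w"] assms(1) by (simp add: norm_mult)
    have cohb: "cmod (coh \<alpha> \<sigma> z m) \<le> cmod e0 * B0 ^ m" for m
      unfolding coh norm_mult norm_power
      by (intro mult_left_mono power_mono bb) auto
    have c1: "L2_conv \<alpha> \<sigma> (\<lambda>K. restr \<alpha> (Q K)) (coh \<alpha> \<sigma> z)"
      by (rule L2_tail[OF assms(1,2)]) (use rQb cohb rQe coh in auto)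
    define C2 where "C2 = cmod e0 * (\<sigma> / \<alpha> * (B0 + 1) + cmod z)"
    have rD: "restr \<alpha> (smult (of_real \<sigma>) (D (Q K))) m
        = of_real \<sigma> * (restr \<alpha> (Q K) (Suc m) - restr \<alpha> (Q K) m) / of_real \<alpha>" for K m
      using restr_Dl[of \<alpha> "Q K" m] by (simp add: DD restr_def)
    have rDb: "cmod (restr \<alpha> (smult (of_real \<sigma>) (D (Q K))) m) \<le> C2 * B0 ^ m" for K m
    proof -
      have "cmod (restr \<alpha> (Q K) (Suc m) - restr \<alpha> (Q K) m) \<le> cmod e0 * B0 ^ Suc m + cmod e0 * B0 ^ m"
        using norm_triangle_ineq4 rQb[of K "Suc m"] rQb[of K m] by (meson add_mono order_trans)
      also have "\<dots> = cmod e0 * (B0 + 1) * B0 ^ m" by (simp add: algebra_simps)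
      finally have h: "cmod (restr \<alpha> (Q K) (Suc m) - restr \<alpha> (Q K) m) \<le> cmod e0 * (B0 + 1) * B0 ^ m" .
      have "cmod (restr \<alpha> (smult (of_real \<sigma>) (D (Q K))) m)
          = \<sigma> / \<alpha> * cmod (restr \<alpha> (Q K) (Suc m) - restr \<alpha> (Q K) m)"
        unfolding rD using assms(1,2) by (simp add: norm_mult norm_divide)
      also have "\<dots> \<le> \<sigma> / \<alpha> * (cmod e0 * (B0 + 1) * B0 ^ m)"
        using h assms(1,2) by (intro mult_left_mono) auto
      also have "\<dots> \<le> C2 * B0 ^ m"
      proof -
        have e: "C2 * B0 ^ m = \<sigma> / \<alpha> * (cmod e0 * (B0 + 1) * B0 ^ m) + cmod e0 * cmod z * B0 ^ m"
          unfolding C2_def by (simp add: algebra_simps add_divide_distrib)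
        have "0 \<le> cmod e0 * cmod z * B0 ^ m" using B0 by simp
        then show ?thesis unfolding e by linarith
      qed
      finally show ?thesis .
    qed
    have zb: "cmod (z * coh \<alpha> \<sigma> z m) \<le> C2 * B0 ^ m" for m
    proof -
      have "cmod (z * coh \<alpha> \<sigma> z m) \<le> cmod z * (cmod e0 * B0 ^ m)"
        unfolding norm_mult by (intro mult_left_mono cohb) auto
      also have "\<dots> \<le> C2 * B0 ^ m"
        unfolding C2_def using B0 assms(1,2) by (simp add: algebra_simps)
      finally show ?thesis .
    qed
    have rDe: "restr \<alpha> (smult (of_real \<sigma>) (D (Q K))) m = z * coh \<alpha> \<sigma> z m" if "m \<le> K" for K m
    proof -
      have "restr \<alpha> (smult (of_real \<sigma>) (D (Q K))) m = of_real \<sigma> * (e0 * \<beta> ^ Suc m - e0 * \<beta> ^ m) / of_real \<alpha>"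
        unfolding rD using that by (simp add: rQe)
      also have "\<dots> = z * (e0 * \<beta> ^ m)"
        using assms(1,2) unfolding \<beta>_def w_def by (simp add: field_simps)
      finally show ?thesis by (simp add: coh)
    qed
    have c2: "L2_conv \<alpha> \<sigma> (\<lambda>K. restr \<alpha> (smult (of_real \<sigma>) (D (Q K)))) (\<lambda>k. z * coh \<alpha> \<sigma> z k)"
      by (rule L2_tail[OF assms(1,2)]) (use rDb zb rDe in auto)
    show ?thesis unfolding closure_graph_def using c1 c2 by blast
  qed
  then show ?thesis using cl by blast
qed

end
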